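(* Let $k\geq 1$ and $n\geq k+2$ be integers. Then the $k$-distance matrices of all $k$-trees with $n$ vertices are equivalent to one another: for any two $k$-trees $T,T'$ with $n$ vertices there exist square integer matrices ${\sf P},{\sf Q}$ with $\det {\sf P},\det{\sf Q}\in\{\pm1\}$ such that ${\sf D}^k(T)={\sf P}\,{\sf D}^k(T')\,{\sf Q}$.
   Context: A $k$-tree is either the complete graph on $k$ vertices, or a graph obtained from a smaller $k$-tree by adding a new vertex joined by $k$ edges to all vertices of a $k$-clique (complete subgraph on $k$ vertices). In a $k$-tree $T$, for $k$-cliques $\tau,\tau'$, a $k$-walk from $\tau$ to $\tau'$ is a sequence $\tau_1\sigma_1\tau_2\sigma_2\cdots\tau_l$ with $\tau_1=\tau$, $\tau_l=\tau'$, the $\tau_i$ being $k$-cliques and $\sigma_i$ a $(k+1)$-clique containing both $\tau_i$ and $\tau_{i+1}$; the $k$-distance $\operatorname{dist}^k(\tau,\tau')$ is the number of $(k+1)$-cliques in a shortest such walk. If $T$ has $c$ $k$-cliques $\tau_1,\dots,\tau_c$ (in any fixed order), the $k$-distance matrix ${\sf D}^k(T)$ is the $c\times c$ integer matrix with $(i,j)$-entry $0$ if $i=j$ and $\operatorname{dist}^k(\tau_i,\tau_j)$ otherwise. (All $k$-trees with $n$ vertices have the same number $k(n-k)+1$ of $k$-cliques.) *)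

theory Defs
  imports "Jordan_Normal_Form.Determinant"
begin

text \<open>Simple graphs: a vertex set V and a set E of undirected edges (2-element sets).\<close>

definition is_clique :: "'a set set \<Rightarrow> 'a set \<Rightarrow> bool" where
  "is_clique E C \<longleftrightarrow> (\<forall>u\<in>C. \<forall>w\<in>C. u \<noteq> w \<longrightarrow> {u, w} \<in> E)"

inductive ktree :: "nat \<Rightarrow> 'a set \<Rightarrow> 'a set set \<Rightarrow> bool" for k :: nat where
  base: "finite V \<Longrightarrow> card V = k \<Longrightarrow>
         ktree k V {{u, w} | u w. u \<in> V \<and> w \<in> V \<and> u \<noteq> w}"
| step: "ktree k V E \<Longrightarrow> v \<notin> V \<Longrightarrow> C \<subseteq> V \<Longrightarrow> card C = k \<Longrightarrow> is_clique E C \<Longrightarrow>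
         ktree k (insert v V) (E \<union> {{v, u} | u. u \<in> C})"

definition cliques_of :: "nat \<Rightarrow> 'a set \<Rightarrow> 'a set set \<Rightarrow> 'a set set" where
  "cliques_of m V E = {C. C \<subseteq> V \<and> finite C \<and> card C = m \<and> is_clique E C}"

definition kstep :: "nat \<Rightarrow> 'a set \<Rightarrow> 'a set set \<Rightarrow> 'a set \<Rightarrow> 'a set \<Rightarrow> bool" where
  "kstep k V E t t' \<longleftrightarrow> t \<in> cliques_of k V E \<and> t' \<in> cliques_of k V E \<and>
      (\<exists>s \<in> cliques_of (Suc k) V E. t \<subseteq> s \<and> t' \<subseteq> s)"

text \<open>k-distance: number of (k+1)-cliques in a shortest k-walk.\<close>

definition kdist :: "nat \<Rightarrow> 'a set \<Rightarrow> 'a set set \<Rightarrow> 'a set \<Rightarrow> 'a set \<Rightarrow> nat" where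
  "kdist k V E t t' = (LEAST m. (kstep k V E ^^ m) t t')"

definition kdist_matrix :: "nat \<Rightarrow> 'a set \<Rightarrow> 'a set set \<Rightarrow> 'a set list \<Rightarrow> int mat" where
  "kdist_matrix k V E cs = mat (length cs) (length cs)
     (\<lambda>(i, j). if i = j then 0 else int (kdist k V E (cs ! i) (cs ! j)))"

end

theory Submission
  imports Defs
begin

lemma ktree_props: "ktree k V E \<Longrightarrow> finite V \<and> card V \<ge> k \<and> (\<forall>e\<in>E. e \<subseteq> V)"
proof (induction rule: ktree.induct)
  case (base V)
  then show ?case by auto
next
  case (step V E v C)
  have "finite (insert v V)" using step by simp
  moreover have "card (insert v V) = Suc (card V)" using step by simp
  moreover have "\<forall>e\<in>E \<union> {{v, u} | u. u \<in> C}. e \<subseteq> insert v V" using step by blast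
  ultimately show ?case using step by simp
qed

lemma relpowp_sym: "(\<And>a b. r a b \<Longrightarrow> r b a) \<Longrightarrow> (r ^^ m) a b \<Longrightarrow> (r ^^ m) b a"
proof (induction m arbitrary: a b)
  case 0 then show ?case by simp
next
  case (Suc m)
  from Suc.prems(2) obtain y where y: "(r ^^ m) a y" "r y b" by (rule relpowp_Suc_E)
  have "(r ^^ m) y a" using Suc.IH[OF Suc.prems(1) y(1)] .
  moreover have "r b y" using Suc.prems(1) y(2) .
  ultimately show ?case by (rule relpowp_Suc_I2[rotated])
qed

lemma kstep_sym: "kstep k V E a b \<Longrightarrow> kstep k V E b a"
  unfolding kstep_def by blast

lemma kdist_sym: "kdist k V E a b = kdist k V E b a"
  unfolding kdist_def
  by (rule arg_cong[where f=Least], rule ext, rule iffI; erule relpowp_sym[rotated]; erule kstep_sym)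

lemma kdist_refl[simp]: "kdist k V E a a = 0"
  unfolding kdist_def by (rule Least_equality) auto

lemma relpowp_mono_pred: fixes r s :: "'a \<Rightarrow> 'a \<Rightarrow> bool" shows "(\<And>a b. r a b \<Longrightarrow> s a b) \<Longrightarrow> (r ^^ m) a b \<Longrightarrow> (s ^^ m) a b"
proof (induction m arbitrary: a b)
  case 0 from 0(2) show ?case by (auto elim: relpowp_0_E intro: relpowp_0_I)
next
  case (Suc m)
  from Suc.prems(2) obtain y where y: "(r ^^ m) a y" "r y b" by (rule relpowp_Suc_E)
  have "(s ^^ m) a y" using Suc.IH[OF Suc.prems(1) y(1)] .
  moreover have "s y b" using Suc.prems(1) y(2) .
  ultimately show ?case by (rule relpowp_Suc_I)
qed

lemma Least_sim:
  fixes P Q :: "nat \<Rightarrow> bool"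
  assumes "\<And>m. P m \<Longrightarrow> Q m" "\<And>m. Q m \<Longrightarrow> \<exists>m'\<le>m. P m'"
  shows "Least Q = Least P"
proof (cases "\<exists>m. Q m")
  case True
  then obtain m where "Q m" by blast
  then have "Q (Least Q)" by (rule LeastI)
  then obtain m' where m': "m' \<le> Least Q" "P m'" using assms(2) by blast
  have "Least P \<le> m'" using m'(2) by (rule Least_le)
  moreover have "Least Q \<le> Least P"
  proof -
    have "P (Least P)" using m'(2) by (rule LeastI)
    then have "Q (Least P)" by (rule assms(1))
    then show ?thesis by (rule Least_le)
  qed
  ultimately show ?thesis using m'(1) by linarith
next
  case False
  then have "Q = P" using assms(1) by (auto simp: fun_eq_iff) 
  then show ?thesis by simp
qed

lemma cliques_base:
  assumes "finite V" "card V = k"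
  shows "cliques_of k V {{u, w} | u w. u \<in> V \<and> w \<in> V \<and> u \<noteq> w} = {V}"
proof (intro equalityI subsetI)
  fix x assume "x \<in> cliques_of k V {{u, w} | u w. u \<in> V \<and> w \<in> V \<and> u \<noteq> w}"
  then have "x \<subseteq> V" "card x = card V" using assms unfolding cliques_of_def by auto
  then show "x \<in> {V}" using assms card_subset_eq by blast
next
  fix x assume "x \<in> {V}"
  then show "x \<in> cliques_of k V {{u, w} | u w. u \<in> V \<and> w \<in> V \<and> u \<noteq> w}"
    using assms unfolding cliques_of_def is_clique_def by auto
qed

locale kext =
  fixes k :: nat and V :: "'a set" and E :: "'a set set" and v :: 'a and C :: "'a set"
  assumes fin: "finite V" and Esub: "\<forall>e\<in>E. e \<subseteq> V"
    and vV: "v \<notin> V" and CV: "C \<subseteq> V" and cardC: "card C = k" and clC: "is_clique E C"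
    and k1: "k \<ge> 1"
begin

definition "V' = insert v V"
definition "E' = E \<union> {{v, u} | u. u \<in> C}"
definition "Nw = (\<lambda>u. insert v (C - {u})) ` C"
definition "Q = insert C Nw"

lemma finC: "finite C" using fin CV finite_subset by blast
lemma vC: "v \<notin> C" using vV CV by blast

lemma clique_old: assumes S: "S \<subseteq> V" shows "is_clique E' S \<longleftrightarrow> is_clique E S"
proof
  assume a: "is_clique E' S"
  show "is_clique E S" unfolding is_clique_def
  proof (intro ballI impI)
    fix u w assume uw: "u \<in> S" "w \<in> S" "u \<noteq> w"
    then have in': "{u,w} \<in> E'" using a unfolding is_clique_def by blast
    have vn: "v \<notin> {u,w}" using uw S vV by blast
    have "{u,w} \<noteq> {v,x}" for x
    proof
      assume "{u,w} = {v,x}"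
      then have "v \<in> {u,w}" by simp
      then show False using vn by blast
    qed
    then have "{u,w} \<notin> {{v, x} | x. x \<in> C}" by blast
    then show "{u,w} \<in> E" using in' unfolding E'_def by blast
  qed
next
  assume "is_clique E S" then show "is_clique E' S" unfolding is_clique_def E'_def by blast
qed

lemma clique_v: assumes a: "is_clique E' S" and vS: "v \<in> S" shows "S - {v} \<subseteq> C"
proof
  fix w assume w: "w \<in> S - {v}"
  then have in': "{v,w} \<in> E'" using a vS unfolding is_clique_def by auto
  have notE: "{v,w} \<notin> E"
  proof
    assume "{v,w} \<in> E"
    then have "{v,w} \<subseteq> V" using Esub by blast
    then show False using vV by simp
  qed
  have "{v,w} \<in> {{v, u} | u. u \<in> C}" using in' notE unfolding E'_def by simp
  then obtain x where x: "x \<in> C" "{v,w} = {v,x}" by blast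
  have "w \<in> {v,w}" by simp
  then have "w \<in> {v,x}" unfolding x(2) .
  then have "w = x" using w by simp
  then show "w \<in> C" using x(1) by simp
qed

lemma Nw_card: "u \<in> C \<Longrightarrow> card (insert v (C - {u})) = k"
  using finC vC cardC k1 by (simp add: card_insert_if)

lemma Nw_clique: "u \<in> C \<Longrightarrow> is_clique E' (insert v (C - {u}))"
  using clC unfolding is_clique_def E'_def by (auto simp: insert_commute)

lemma C_clique': "is_clique E' (insert v C)"
  using clC unfolding is_clique_def E'_def by (auto simp: insert_commute)

lemma sub_card_minus1:
  assumes "S \<subseteq> C" "card S = k - 1"
  shows "\<exists>u\<in>C. S = C - {u}"
proof -
  have "card (C - S) = 1" using assms finC cardC k1 by (simp add: card_Diff_subset finite_subset)
  then obtain u where u: "C - S = {u}" by (auto simp: card_Suc_eq)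
  then show ?thesis using assms(1) by (intro bexI[of _ u]) auto
qed

lemma cliques_k: "cliques_of k V' E' = cliques_of k V E \<union> Nw"
proof (intro equalityI subsetI)
  fix S assume S: "S \<in> cliques_of k V' E'"
  show "S \<in> cliques_of k V E \<union> Nw"
  proof (cases "v \<in> S")
    case True
    have sub: "S - {v} \<subseteq> C" using S True clique_v unfolding cliques_of_def by blast
    have "card (S - {v}) = k - 1" using S True unfolding cliques_of_def by auto
    then obtain u where "u \<in> C" "S - {v} = C - {u}" using sub_card_minus1 sub by blast
    then have "S = insert v (C - {u})" using True by blast
    then show ?thesis using \<open>u \<in> C\<close> unfolding Nw_def by blast
  next
    case False
    then have "S \<subseteq> V" using S unfolding cliques_of_def V'_def by blast
    then show ?thesis using S clique_old unfolding cliques_of_def by blast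
  qed
next
  fix S assume "S \<in> cliques_of k V E \<union> Nw"
  then show "S \<in> cliques_of k V' E'"
  proof
    assume "S \<in> cliques_of k V E"
    then show ?thesis using clique_old unfolding cliques_of_def V'_def by blast
  next
    assume "S \<in> Nw"
    then obtain u where u: "u \<in> C" "S = insert v (C - {u})" unfolding Nw_def by blast
    then show ?thesis using Nw_card Nw_clique CV finC unfolding cliques_of_def V'_def by auto
  qed
qed

lemma cliques_k1: "cliques_of (Suc k) V' E' = cliques_of (Suc k) V E \<union> {insert v C}"
proof (intro equalityI subsetI)
  fix S assume S: "S \<in> cliques_of (Suc k) V' E'"
  show "S \<in> cliques_of (Suc k) V E \<union> {insert v C}"
  proof (cases "v \<in> S")
    case True
    have sub: "S - {v} \<subseteq> C" using S True clique_v unfolding cliques_of_def by blast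
    have "card (S - {v}) = k" using S True unfolding cliques_of_def by auto
    then have "S - {v} = C" using cardC by (intro card_subset_eq[OF finC sub]) simp
    then have "S = insert v C" using True by blast
    then show ?thesis by blast
  next
    case False
    then have "S \<subseteq> V" using S unfolding cliques_of_def V'_def by blast
    then show ?thesis using S clique_old unfolding cliques_of_def by blast
  qed
next
  fix S assume "S \<in> cliques_of (Suc k) V E \<union> {insert v C}"
  then show "S \<in> cliques_of (Suc k) V' E'"
  proof
    assume "S \<in> cliques_of (Suc k) V E"
    then show ?thesis using clique_old unfolding cliques_of_def V'_def by blast
  next
    assume "S \<in> {insert v C}"
    then show ?thesis using C_clique' CV finC vC cardC unfolding cliques_of_def V'_def by auto
  qed
qed

lemma old_not_Nw: "t \<in> cliques_of k V E \<Longrightarrow> t \<notin> Nw"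
  unfolding cliques_of_def Nw_def using vV by auto

lemma C_old: "C \<in> cliques_of k V E"
  unfolding cliques_of_def using CV finC cardC clC by auto

lemma Q_sub: "t \<subseteq> insert v C \<Longrightarrow> t \<in> cliques_of k V' E' \<Longrightarrow> t \<in> Q"
proof -
  assume t: "t \<subseteq> insert v C" "t \<in> cliques_of k V' E'"
  show "t \<in> Q"
  proof (cases "v \<in> t")
    case True
    have "card (t - {v}) = k - 1" using t True unfolding cliques_of_def by auto
    moreover have "t - {v} \<subseteq> C" using t(1) by blast
    ultimately obtain u where u: "u \<in> C" "t - {v} = C - {u}" using sub_card_minus1 by blast
    have "t = insert v (t - {v})" using True by blast
    then have "t = insert v (C - {u})" unfolding u(2) .
    then show ?thesis using u(1) unfolding Q_def Nw_def by blast
  next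
    case False
    then have tC: "t \<subseteq> C" using t by blast
    have "card t = card C" using t(2) cardC unfolding cliques_of_def by simp
    then have "t = C" by (rule card_subset_eq[OF finC tC])
    then show ?thesis unfolding Q_def by blast
  qed
qed

lemma Q_cliques: "Q \<subseteq> cliques_of k V' E'"
  using cliques_k C_old unfolding Q_def by auto

lemma Q_in: "t \<in> Q \<Longrightarrow> t \<subseteq> insert v C"
  unfolding Q_def Nw_def by auto

lemma kstep_new: "kstep k V' E' t t' \<longleftrightarrow> kstep k V E t t' \<or> (t \<in> Q \<and> t' \<in> Q)"
proof
  assume a: "kstep k V' E' t t'"
  then obtain s where s: "s \<in> cliques_of (Suc k) V' E'" "t \<subseteq> s" "t' \<subseteq> s"
    and tt: "t \<in> cliques_of k V' E'" "t' \<in> cliques_of k V' E'"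
    unfolding kstep_def by blast
  show "kstep k V E t t' \<or> (t \<in> Q \<and> t' \<in> Q)"
  proof (cases "s = insert v C")
    case True
    have "t \<in> Q" by (rule Q_sub) (use s tt True in auto)
    moreover have "t' \<in> Q" by (rule Q_sub) (use s tt True in auto)
    ultimately show ?thesis by blast
  next
    case False
    then have s': "s \<in> cliques_of (Suc k) V E" using s cliques_k1 by blast
    then have "s \<subseteq> V" unfolding cliques_of_def by blast
    then have "t \<subseteq> V" "t' \<subseteq> V" using s by blast+
    then have "t \<in> cliques_of k V E" "t' \<in> cliques_of k V E"
      using tt clique_old unfolding cliques_of_def by auto
    then show ?thesis using s' s unfolding kstep_def by blast
  qed
next
  assume "kstep k V E t t' \<or> (t \<in> Q \<and> t' \<in> Q)"
  then show "kstep k V' E' t t'"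
  proof
    assume "kstep k V E t t'"
    then show ?thesis unfolding kstep_def using cliques_k cliques_k1 by blast
  next
    assume a: "t \<in> Q \<and> t' \<in> Q"
    have s: "insert v C \<in> cliques_of (Suc k) V' E'" using cliques_k1 by blast
    have "t \<in> cliques_of k V' E'" "t' \<in> cliques_of k V' E'" using a Q_cliques by blast+
    moreover have "t \<subseteq> insert v C" "t' \<subseteq> insert v C" using a Q_in by blast+
    ultimately show ?thesis unfolding kstep_def using s by blast
  qed
qed

definition "pr t = (if t \<in> Nw then C else t)"

lemma pr_step: "kstep k V' E' t t' \<Longrightarrow> pr t = pr t' \<or> kstep k V E (pr t) (pr t')"
proof -
  assume "kstep k V' E' t t'"
  then have "kstep k V E t t' \<or> (t \<in> Q \<and> t' \<in> Q)" using kstep_new by blast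
  then show ?thesis
  proof
    assume a: "kstep k V E t t'"
    then have "t \<notin> Nw" "t' \<notin> Nw" using old_not_Nw unfolding kstep_def by blast+
    then show ?thesis using a unfolding pr_def by simp
  next
    assume "t \<in> Q \<and> t' \<in> Q"
    then show ?thesis unfolding pr_def Q_def by auto
  qed
qed

lemma pr_path: "(kstep k V' E' ^^ m) t t' \<Longrightarrow> \<exists>m'\<le>m. (kstep k V E ^^ m') (pr t) (pr t')"
proof (induction m arbitrary: t')
  case 0 then show ?case by auto
next
  case (Suc m)
  from Suc.prems obtain y where y: "(kstep k V' E' ^^ m) t y" "kstep k V' E' y t'" by (rule relpowp_Suc_E)
  from Suc.IH[OF y(1)] obtain m' where m': "m' \<le> m" "(kstep k V E ^^ m') (pr t) (pr y)" by blast
  from pr_step[OF y(2)] show ?case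
  proof
    assume "pr y = pr t'" then show ?thesis using m' by (intro exI[of _ m']) auto
  next
    assume "kstep k V E (pr y) (pr t')"
    then have "(kstep k V E ^^ Suc m') (pr t) (pr t')" using m'(2) by (rule relpowp_Suc_I[rotated])
    then show ?thesis using m'(1) by (intro exI[of _ "Suc m'"]) simp
  qed
qed

lemma kstep_mono: "kstep k V E a b \<Longrightarrow> kstep k V' E' a b"
  using kstep_new by blast

lemma kstep_pow_mono: "(kstep k V E ^^ m) a b \<Longrightarrow> (kstep k V' E' ^^ m) a b"
proof (induction m arbitrary: b)
  case 0 then show ?case by (auto elim: relpowp_0_E intro: relpowp_0_I)
next
  case (Suc m)
  from Suc.prems obtain y where y: "(kstep k V E ^^ m) a y" "kstep k V E y b" by (rule relpowp_Suc_E)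
  have "(kstep k V' E' ^^ m) a y" using Suc.IH[OF y(1)] .
  moreover have "kstep k V' E' y b" using y(2) by (rule kstep_mono)
  ultimately show ?case by (rule relpowp_Suc_I)
qed

lemma dist_old:
  assumes "x \<in> cliques_of k V E" "y \<in> cliques_of k V E"
  shows "kdist k V' E' x y = kdist k V E x y"
proof -
  have px: "pr x = x" "pr y = y" using assms old_not_Nw unfolding pr_def by auto
  show ?thesis unfolding kdist_def
  proof (rule Least_sim)
    fix m assume "(kstep k V E ^^ m) x y"
    then show "(kstep k V' E' ^^ m) x y" by (rule kstep_pow_mono)
  next
    fix m assume "(kstep k V' E' ^^ m) x y"
    from pr_path[OF this] show "\<exists>m'\<le>m. (kstep k V E ^^ m') x y" unfolding px .
  qed
qed

lemma dist_new_old: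
  assumes "n \<in> Nw" "x \<in> cliques_of k V E" "(kstep k V E)\<^sup>*\<^sup>* C x"
  shows "kdist k V' E' n x = kdist k V E C x + 1"
proof -
  let ?P = "\<lambda>m. (kstep k V E ^^ m) C x"
  let ?P' = "\<lambda>m. (kstep k V' E' ^^ m) n x"
  have ex: "\<exists>m. ?P m" using assms(3) by (simp add: rtranclp_power)
  have LP: "?P (Least ?P)" using ex by (meson LeastI)
  have nQ: "n \<in> Q" "C \<in> Q" using assms(1) unfolding Q_def by blast+
  have nC: "kstep k V' E' n C" using nQ kstep_new[of n C] by blast
  have A: "?P' (Suc (Least ?P))"
    using relpowp_Suc_I2[of "kstep k V' E'" n C, OF nC kstep_pow_mono[OF LP]] .
  have B: "Suc (Least ?P) \<le> m" if "?P' m" for m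
  proof (cases m)
    case 0
    then have "n = x" using that 0 by simp
    then have False using old_not_Nw[OF assms(2)] assms(1) by simp
    then show ?thesis ..
  next
    case (Suc m0)
    from that Suc have "(kstep k V' E' ^^ Suc m0) n x" by simp
    then obtain y where y: "kstep k V' E' n y" "(kstep k V' E' ^^ m0) y x"
      by (rule relpowp_Suc_E2)
    have "\<not> kstep k V E n y" using assms(1) old_not_Nw unfolding kstep_def by blast
    then have "y \<in> Q" using y(1) kstep_new[of n y] by blast
    then have "pr y = C" unfolding pr_def Q_def by auto
    moreover have "pr x = x" using assms(2) old_not_Nw unfolding pr_def by auto
    ultimately obtain m' where "m' \<le> m0" "?P m'" using pr_path[OF y(2)] by auto
    then have "Least ?P \<le> m'" by (intro Least_le)
    then show ?thesis using Suc \<open>m' \<le> m0\<close> by simp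
  qed
  have "Least ?P' = Suc (Least ?P)" by (rule Least_equality[of ?P', OF A B])
  then show ?thesis unfolding kdist_def by simp
qed

lemma dist_new_new:
  assumes "n \<in> Nw" "n' \<in> Nw" "n \<noteq> n'"
  shows "kdist k V' E' n n' = 1"
proof -
  have "kstep k V' E' n n'" using kstep_new assms unfolding Q_def by blast
  moreover have "1 \<le> m" if "(kstep k V' E' ^^ m) n n'" for m
  proof (cases m)
    case 0
    then have "n = n'" using that by simp
    then show ?thesis using assms(3) by simp
  next
    case (Suc m0) then show ?thesis by simp
  qed
  ultimately show ?thesis unfolding kdist_def by (intro Least_equality) auto
qed

lemma conn_new:
  assumes "\<forall>t\<in>cliques_of k V E. \<forall>t'\<in>cliques_of k V E. (kstep k V E)\<^sup>*\<^sup>* t t'"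
  shows "\<forall>t\<in>cliques_of k V' E'. \<forall>t'\<in>cliques_of k V' E'. (kstep k V' E')\<^sup>*\<^sup>* t t'"
proof -
  have old: "(kstep k V' E')\<^sup>*\<^sup>* t t'" if "t \<in> cliques_of k V E" "t' \<in> cliques_of k V E" for t t'
  proof -
    have "(kstep k V E)\<^sup>*\<^sup>* t t'" using assms that by blast
    then show ?thesis by (induction rule: rtranclp_induct) (auto intro: rtranclp.rtrancl_into_rtrancl kstep_mono)
  qed
  have q: "kstep k V' E' t t'" if "t \<in> Q" "t' \<in> Q" for t t' using kstep_new that by blast
  have CQ: "C \<in> Q" unfolding Q_def by blast
  show ?thesis unfolding cliques_k
  proof (intro ballI)
    fix t t' assume t: "t \<in> cliques_of k V E \<union> Nw" and t': "t' \<in> cliques_of k V E \<union> Nw"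
    have a: "(kstep k V' E')\<^sup>*\<^sup>* t C"
    proof (cases "t \<in> Nw")
      case True
      then have "t \<in> Q" unfolding Q_def by blast
      then show ?thesis using q[OF _ CQ] by (simp add: r_into_rtranclp)
    next
      case False
      then show ?thesis using t old[OF _ C_old] by blast
    qed
    have b: "(kstep k V' E')\<^sup>*\<^sup>* C t'"
    proof (cases "t' \<in> Nw")
      case True
      then have "t' \<in> Q" unfolding Q_def by blast
      then show ?thesis using q[OF CQ] by (simp add: r_into_rtranclp)
    next
      case False
      then show ?thesis using t' old[OF C_old] by blast
    qed
    show "(kstep k V' E')\<^sup>*\<^sup>* t t'" by (rule rtranclp_trans[OF a b])
  qed
qed

end


definition Kmat :: "nat \<Rightarrow> nat \<Rightarrow> int mat" where
  "Kmat k N = mat N N (\<lambda>(i,j). if i = j then (if i = 0 then 0 else -2)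
     else if i = 0 \<or> j = 0 then 1 else if (i-1) div k = (j-1) div k then -1 else 0)"

definition ones :: "nat \<Rightarrow> int vec" where "ones n = vec n (\<lambda>_. 1)"

lemma ones_simps[simp]: "dim_vec (ones n) = n" "i < n \<Longrightarrow> ones n $ i = 1"
  unfolding ones_def by auto

lemma ones_carrier[simp]: "ones n \<in> carrier_vec n"
  unfolding ones_def by auto

lemma mult_entry:
  assumes "A \<in> carrier_mat n m" "B \<in> carrier_mat m p" "i < n" "j < p"
  shows "(A * B) $$ (i,j) = (\<Sum>y\<in>{0..<m}. A $$ (i,y) * B $$ (y,j))"
  using assms by (simp add: scalar_prod_def)

lemma mult_vec_entry:
  assumes "A \<in> carrier_mat n m" "i < n" "dim_vec w = m"
  shows "(A *\<^sub>v w) $ i = (\<Sum>y\<in>{0..<m}. A $$ (i,y) * w $ y)"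
  using assms by (simp add: scalar_prod_def)

lemma sum_delta_mult:
  fixes c N :: nat
  assumes "c < N"
  shows "(\<Sum>y\<in>{0..<N}. (if y = c then a else 0) * (f y :: int)) = a * f c"
proof -
  have "(\<Sum>y\<in>{0..<N}. (if y = c then a else 0) * f y) = (\<Sum>y\<in>{0..<N}. if y = c then a * f y else 0)"
    by (rule sum.cong) auto
  also have "\<dots> = a * f c" by (subst sum.delta) (use assms in auto)
  finally show ?thesis .
qed

lemma sum_delta_mult2:
  fixes c N :: nat
  assumes "c < N"
  shows "(\<Sum>y\<in>{0..<N}. (f y :: int) * (if y = c then a else 0)) = f c * a"
proof -
  have "(\<Sum>y\<in>{0..<N}. f y * (if y = c then a else 0)) = (\<Sum>y\<in>{0..<N}. if y = c then f y * a else 0)"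
    by (rule sum.cong) auto
  also have "\<dots> = f c * a" by (subst sum.delta) (use assms in auto)
  finally show ?thesis .
qed

lemma div_block:
  assumes "k \<ge> 1" "m * k \<le> x" "x < m * k + k"
  shows "x div k = (m::nat)"
  using assms by (metis add.commute div_nat_eqI mult.commute mult_Suc_right)

lemma Kmat_split:
  assumes k: "k \<ge> 1" and N: "N = 1 + m * k"
  shows "Kmat k (N + k) = four_block_mat (Kmat k N)
     (mat N k (\<lambda>(i,j). if i = 0 then 1 else 0))
     (mat k N (\<lambda>(i,j). if j = 0 then 1 else 0))
     (mat k k (\<lambda>(i,j). if i = j then -2 else -1))"
proof (rule eq_matI)
  fix i j assume ij: "i < dim_row (four_block_mat (Kmat k N)
     (mat N k (\<lambda>(i,j). if i = 0 then 1 else 0))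
     (mat k N (\<lambda>(i,j). if j = 0 then 1 else 0))
     (mat k k (\<lambda>(i,j). if i = j then -2 else -1)))"
     "j < dim_col (four_block_mat (Kmat k N)
     (mat N k (\<lambda>(i,j). if i = 0 then 1 else 0))
     (mat k N (\<lambda>(i,j). if j = 0 then 1 else 0))
     (mat k k (\<lambda>(i,j). if i = j then -2 else -1)))"
  then have i: "i < N + k" and j: "j < N + k" by (auto simp: Kmat_def)
  have blk: "(x - 1) div k = m" if "N \<le> x" "x < N + k" for x
    using that N k by (intro div_block) auto
  have lowblk: "(x - 1) div k < m" if "0 < x" "x < N" for x
    using that N k by (simp add: less_mult_imp_div_less)
  show "Kmat k (N + k) $$ (i, j) = four_block_mat (Kmat k N)
     (mat N k (\<lambda>(i,j). if i = 0 then 1 else 0))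
     (mat k N (\<lambda>(i,j). if j = 0 then 1 else 0))
     (mat k k (\<lambda>(i,j). if i = j then -2 else -1)) $$ (i, j)"
  proof (cases "i < N")
    case True note iN = True
    show ?thesis
    proof (cases "j < N")
      case True
      then show ?thesis using iN i j by (simp add: Kmat_def)
    next
      case False
      then have "(j-1) div k = m" using blk j by simp
      moreover have "i \<noteq> 0 \<Longrightarrow> (i-1) div k < m" using lowblk iN by simp
      ultimately show ?thesis using iN False i j N by (cases "i = 0") (auto simp: Kmat_def)
    qed
  next
    case False note iN = False
    have bi: "(i-1) div k = m" using blk i iN by simp
    show ?thesis
    proof (cases "j < N")
      case True
      have "j \<noteq> 0 \<Longrightarrow> (j-1) div k < m" using lowblk True by simp
      then show ?thesis using iN True i j N bi by (cases "j = 0") (auto simp: Kmat_def)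
    next
      case False
      then have "(j-1) div k = m" using blk j by simp
      moreover have "(i - N = j - N) = (i = j)" using iN False by arith
      ultimately show ?thesis using iN False i j N bi by (auto simp: Kmat_def)
    qed
  qed
qed (auto simp: Kmat_def)

lemma step_matrix:
  fixes A P :: "int mat"
  assumes k: "k \<ge> 1" and N: "N = 1 + m * k"
   and A: "A \<in> carrier_mat N N" and P: "P \<in> carrier_mat N N" and c: "c < N"
   and Acc: "A $$ (c,c) = 0"
   and PAP: "P * A * transpose_mat P = Kmat k N" and P1: "P *\<^sub>v ones N = unit_vec N 0"
   and B_def: "B = mat N k (\<lambda>(x,j). A $$ (x,c) + 1)"
   and Bt_def: "Bt = mat k N (\<lambda>(i,x). A $$ (c,x) + 1)"
   and M_def: "M = mat k k (\<lambda>(i,j). if i = j then 0 else 1)"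
   and Rn_def: "Rn = mat k N (\<lambda>(i,x). if x = c then -1 else 0)"
   and P2_def: "P2 = four_block_mat P (0\<^sub>m N k) Rn (1\<^sub>m k)"
  shows "P2 * four_block_mat A B Bt M * transpose_mat P2 = Kmat k (N+k)"
    and "P2 *\<^sub>v ones (N+k) = unit_vec (N+k) 0" and "det P2 = det P"
    and "P2 \<in> carrier_mat (N+k) (N+k)"
proof -
  have Bc: "B \<in> carrier_mat N k" and Btc: "Bt \<in> carrier_mat k N" and Mc: "M \<in> carrier_mat k k"
    and Rc: "Rn \<in> carrier_mat k N" unfolding B_def Bt_def M_def Rn_def by auto
  define O1 :: "int mat" where "O1 = mat k N (\<lambda>_. 1)"
  have O1c: "O1 \<in> carrier_mat k N" unfolding O1_def by auto
  have rowsum: "(\<Sum>y\<in>{0..<N}. P $$ (i,y)) = (if i = 0 then 1 else 0)" if "i < N" for i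
  proof -
    have "(P *\<^sub>v ones N) $ i = (\<Sum>y\<in>{0..<N}. P $$ (i,y) * ones N $ y)"
      by (rule mult_vec_entry[OF P that]) simp
    also have "\<dots> = (\<Sum>y\<in>{0..<N}. P $$ (i,y))" by (rule sum.cong) auto
    finally show ?thesis using P1 that by simp
  qed
  have Rsum: "(\<Sum>y\<in>{0..<N}. Rn $$ (i,y)) = -1" if "i < k" for i
  proof -
    have "(\<Sum>y\<in>{0..<N}. Rn $$ (i,y)) = (\<Sum>y\<in>{0..<N}. (if y = c then -1 else 0) * 1)"
      by (rule sum.cong) (use that in \<open>auto simp: Rn_def\<close>)
    also have "\<dots> = -1" using sum_delta_mult[OF c, of "-1" "\<lambda>_. 1"] by simp
    finally show ?thesis .
  qed
  show P2c: "P2 \<in> carrier_mat (N+k) (N+k)" unfolding P2_def using P by auto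
  have X: "P2 * four_block_mat A B Bt M = four_block_mat (P*A) (P*B) O1 (-(1\<^sub>m k))"
    unfolding P2_def
  proof (subst mult_four_block_mat[OF P zero_carrier_mat Rc one_carrier_mat A Bc Btc Mc],
      rule cong_four_block_mat)
    show "P * A + 0\<^sub>m N k * Bt = P * A" using P A Btc by simp
    show "P * B + 0\<^sub>m N k * M = P * B" using P Bc Mc by simp
    show "Rn * A + 1\<^sub>m k * Bt = O1"
    proof (rule eq_matI)
      fix i x assume "i < dim_row O1" "x < dim_col O1"
      then have ix: "i < k" "x < N" unfolding O1_def by auto
      have "(Rn * A) $$ (i,x) = (\<Sum>y\<in>{0..<N}. (if y = c then -1 else 0) * A $$ (y,x))"
        by (subst mult_entry[OF Rc A ix]) (rule sum.cong, auto simp: Rn_def ix)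
      also have "\<dots> = - A $$ (c,x)" using sum_delta_mult[OF c] by simp
      finally show "(Rn * A + 1\<^sub>m k * Bt) $$ (i,x) = O1 $$ (i,x)"
        using ix Rc A Btc by (simp add: Bt_def O1_def)
    qed (use Rc A Btc O1c in auto)
    show "Rn * B + 1\<^sub>m k * M = - 1\<^sub>m k"
    proof (rule eq_matI)
      fix i j assume "i < dim_row (- 1\<^sub>m k :: int mat)" "j < dim_col (- 1\<^sub>m k :: int mat)"
      then have ij: "i < k" "j < k" by auto
      have "(Rn * B) $$ (i,j) = (\<Sum>y\<in>{0..<N}. (if y = c then -1 else 0) * B $$ (y,j))"
        by (subst mult_entry[OF Rc Bc ij]) (rule sum.cong, auto simp: Rn_def ij)
      also have "\<dots> = - B $$ (c,j)" using sum_delta_mult[OF c] by simp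
      also have "\<dots> = -1" using c ij Acc by (simp add: B_def)
      finally show "(Rn * B + 1\<^sub>m k * M) $$ (i,j) = (- 1\<^sub>m k) $$ (i,j)"
        using ij Rc Bc Mc by (simp add: M_def)
    qed (use Rc Bc Mc in auto)
  qed
  have T: "transpose_mat P2 = four_block_mat (transpose_mat P) (transpose_mat Rn) (0\<^sub>m k N) (1\<^sub>m k)"
    unfolding P2_def by (subst transpose_four_block_mat[OF P zero_carrier_mat Rc one_carrier_mat]) simp
  have PAc: "P * A \<in> carrier_mat N N" and PBc: "P * B \<in> carrier_mat N k" using P A Bc by auto
  have PTc: "transpose_mat P \<in> carrier_mat N N" and RTc: "transpose_mat Rn \<in> carrier_mat N k"
    using P Rc by auto
  have m1c: "- 1\<^sub>m k \<in> carrier_mat k k" by simp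
  show "P2 * four_block_mat A B Bt M * transpose_mat P2 = Kmat k (N+k)"
    unfolding X T Kmat_split[OF k N]
  proof (subst mult_four_block_mat[OF PAc PBc O1c m1c PTc RTc zero_carrier_mat one_carrier_mat],
      rule cong_four_block_mat)
    have "P * B * 0\<^sub>m k N = 0\<^sub>m N N" using PBc by (simp add: right_mult_zero_mat)
    moreover have "Kmat k N \<in> carrier_mat N N" unfolding Kmat_def by simp
    ultimately show "P * A * transpose_mat P + P * B * 0\<^sub>m k N = Kmat k N"
      using PAP by simp
    show "P * A * transpose_mat Rn + P * B * 1\<^sub>m k = mat N k (\<lambda>(i, j). if i = 0 then 1 else 0)"
    proof (rule eq_matI)
      fix i j assume "i < dim_row (mat N k (\<lambda>(i, j). if i = 0 then 1 else 0) :: int mat)"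
        "j < dim_col (mat N k (\<lambda>(i, j). if i = 0 then 1 else 0) :: int mat)"
      then have ij: "i < N" "j < k" by auto
      have "(P * A * transpose_mat Rn) $$ (i,j) = (\<Sum>y\<in>{0..<N}. (P*A) $$ (i,y) * (if y = c then -1 else 0))"
        by (subst mult_entry[OF PAc RTc ij]) (rule sum.cong, auto simp: Rn_def ij)
      also have "\<dots> = - (P*A) $$ (i,c)" using sum_delta_mult2[OF c] by simp
      also have "\<dots> = - (\<Sum>z\<in>{0..<N}. P $$ (i,z) * A $$ (z,c))"
        using mult_entry[OF P A ij(1) c] by simp
      finally have 1: "(P * A * transpose_mat Rn) $$ (i,j) = - (\<Sum>z\<in>{0..<N}. P $$ (i,z) * A $$ (z,c))" .
      have "(P * B) $$ (i,j) = (\<Sum>z\<in>{0..<N}. P $$ (i,z) * (A $$ (z,c) + 1))"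
        by (subst mult_entry[OF P Bc ij]) (rule sum.cong, auto simp: B_def ij)
      also have "\<dots> = (\<Sum>z\<in>{0..<N}. P $$ (i,z) * A $$ (z,c)) + (\<Sum>z\<in>{0..<N}. P $$ (i,z))"
        by (simp add: distrib_left sum.distrib)
      finally have 2: "(P * B) $$ (i,j) = (\<Sum>z\<in>{0..<N}. P $$ (i,z) * A $$ (z,c)) + (\<Sum>z\<in>{0..<N}. P $$ (i,z))" .
      show "(P * A * transpose_mat Rn + P * B * 1\<^sub>m k) $$ (i,j) = mat N k (\<lambda>(i, j). if i = 0 then 1 else 0) $$ (i,j)"
        using ij PAc RTc PBc 1 2 rowsum[OF ij(1)] right_mult_one_mat[OF PBc] carrier_matD[OF PBc] by simp
    qed (use PAc RTc PBc in auto)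
    show "O1 * transpose_mat P + - 1\<^sub>m k * 0\<^sub>m k N = mat k N (\<lambda>(i, j). if j = 0 then 1 else 0)"
    proof (rule eq_matI)
      fix i x assume "i < dim_row (mat k N (\<lambda>(i, j). if j = 0 then 1 else 0) :: int mat)"
        "x < dim_col (mat k N (\<lambda>(i, j). if j = 0 then 1 else 0) :: int mat)"
      then have ix: "i < k" "x < N" by auto
      have "(O1 * transpose_mat P) $$ (i,x) = (\<Sum>y\<in>{0..<N}. P $$ (x,y))"
        by (subst mult_entry[OF O1c PTc ix]) (rule sum.cong, auto simp: O1_def ix carrier_matD[OF P])
      then show "(O1 * transpose_mat P + - 1\<^sub>m k * 0\<^sub>m k N) $$ (i,x) = mat k N (\<lambda>(i, j). if j = 0 then 1 else 0) $$ (i,x)"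
        using ix O1c PTc rowsum[OF ix(2)] by simp
    qed (use O1c PTc in auto)
    show "O1 * transpose_mat Rn + - 1\<^sub>m k * 1\<^sub>m k = mat k k (\<lambda>(i, j). if i = j then -2 else -1)"
    proof (rule eq_matI)
      fix i j assume "i < dim_row (mat k k (\<lambda>(i, j). if i = j then -2 else -1) :: int mat)"
        "j < dim_col (mat k k (\<lambda>(i, j). if i = j then -2 else -1) :: int mat)"
      then have ij: "i < k" "j < k" by auto
      have "(O1 * transpose_mat Rn) $$ (i,j) = (\<Sum>y\<in>{0..<N}. Rn $$ (j,y))"
        by (subst mult_entry[OF O1c RTc ij]) (rule sum.cong, auto simp: O1_def ij carrier_matD[OF Rc])
      then show "(O1 * transpose_mat Rn + - 1\<^sub>m k * 1\<^sub>m k) $$ (i,j) = mat k k (\<lambda>(i, j). if i = j then -2 else -1) $$ (i,j)"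
        using ij O1c RTc Rsum[OF ij(2)] by simp
    qed (use O1c RTc in auto)
  qed
  have one_split: "ones (N+k) = (ones N @\<^sub>v ones k)"
    by (rule eq_vecI) auto
  show "P2 *\<^sub>v ones (N+k) = unit_vec (N+k) 0"
    unfolding one_split P2_def
  proof (subst four_block_mat_mult_vec[OF P zero_carrier_mat Rc one_carrier_mat ones_carrier ones_carrier],
      rule eq_vecI)
    fix i assume "i < dim_vec (unit_vec (N + k) 0 :: int vec)"
    then have i: "i < N + k" by simp
    show "((P *\<^sub>v ones N + 0\<^sub>m N k *\<^sub>v ones k) @\<^sub>v (Rn *\<^sub>v ones N + 1\<^sub>m k *\<^sub>v ones k)) $ i = unit_vec (N + k) 0 $ i"
    proof (cases "i < N")
      case True
      then show ?thesis using P1 P i by simp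
    next
      case False
      have "(Rn *\<^sub>v ones N) $ (i - N) = (\<Sum>y\<in>{0..<N}. Rn $$ (i - N, y) * ones N $ y)"
        by (rule mult_vec_entry[OF Rc]) (use i False in auto)
      also have "\<dots> = (\<Sum>y\<in>{0..<N}. Rn $$ (i - N, y))" by (rule sum.cong) auto
      also have "\<dots> = -1" using Rsum i False by simp
      finally show ?thesis using False i Rc N by simp
    qed
  qed (use P Rc in auto)
  show "det P2 = det P" unfolding P2_def
    by (subst det_four_block_mat_upper_right_zero[OF P refl Rc one_carrier_mat]) simp
qed


lemma kdm_entry:
  "i < length cs \<Longrightarrow> j < length cs \<Longrightarrow>
   kdist_matrix k V E cs $$ (i,j) = int (kdist k V E (cs!i) (cs!j))"
  unfolding kdist_matrix_def by simp

lemma kdm_carrier: "kdist_matrix k V E cs \<in> carrier_mat (length cs) (length cs)"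
  unfolding kdist_matrix_def by simp

definition Inv :: "nat \<Rightarrow> 'a set \<Rightarrow> 'a set set \<Rightarrow> bool" where
  "Inv k V E \<longleftrightarrow> (\<exists>cs P. distinct cs \<and> set cs = cliques_of k V E \<and> length cs = 1 + (card V - k) * k \<and>
     P \<in> carrier_mat (length cs) (length cs) \<and> det P \<in> {1,-1} \<and>
     P * kdist_matrix k V E cs * transpose_mat P = Kmat k (length cs) \<and>
     P *\<^sub>v ones (length cs) = unit_vec (length cs) 0) \<and>
    (\<forall>t\<in>cliques_of k V E. \<forall>t'\<in>cliques_of k V E. (kstep k V E)\<^sup>*\<^sup>* t t')"

lemma Inv_base:
  assumes "finite V" "card V = k"
  shows "Inv k V {{u, w} | u w. u \<in> V \<and> w \<in> V \<and> u \<noteq> w}"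
proof -
  let ?E = "{{u, w} | u w. u \<in> V \<and> w \<in> V \<and> u \<noteq> w}"
  have cl: "cliques_of k V ?E = {V}" by (rule cliques_base[OF assms])
  have D: "kdist_matrix k V ?E [V] = Kmat k 1"
    by (rule eq_matI) (auto simp: kdist_matrix_def Kmat_def)
  have "1\<^sub>m 1 * kdist_matrix k V ?E [V] * transpose_mat (1\<^sub>m 1) = Kmat k 1"
    using D kdm_carrier[of k V ?E "[V]"] by simp
  moreover have "1\<^sub>m 1 *\<^sub>v ones 1 = unit_vec 1 0"
    by (rule eq_vecI) auto
  ultimately have "distinct [V] \<and> set [V] = cliques_of k V ?E \<and> length [V] = 1 + (card V - k) * k \<and>
     1\<^sub>m 1 \<in> carrier_mat (length [V]) (length [V]) \<and> det (1\<^sub>m 1 :: int mat) \<in> {1,-1} \<and>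
     1\<^sub>m 1 * kdist_matrix k V ?E [V] * transpose_mat (1\<^sub>m 1) = Kmat k (length [V]) \<and>
     1\<^sub>m 1 *\<^sub>v ones (length [V]) = unit_vec (length [V]) 0"
    using cl assms by simp
  then have ex: "\<exists>cs P. distinct cs \<and> set cs = cliques_of k V ?E \<and> length cs = 1 + (card V - k) * k \<and>
     P \<in> carrier_mat (length cs) (length cs) \<and> det P \<in> {1,-1} \<and>
     P * kdist_matrix k V ?E cs * transpose_mat P = Kmat k (length cs) \<and>
     P *\<^sub>v ones (length cs) = unit_vec (length cs) 0" by (intro exI)
  have co: "\<forall>t\<in>cliques_of k V ?E. \<forall>t'\<in>cliques_of k V ?E. (kstep k V ?E)\<^sup>*\<^sup>* t t'"
    unfolding cl by simp
  show ?thesis unfolding Inv_def using ex co by (rule conjI)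
qed

context kext
begin

lemma Inv_step:
  assumes IH: "Inv k V E"
  shows "Inv k (insert v V) (E \<union> {{v, u} | u. u \<in> C})"
proof -
  from IH obtain cs P where cs: "distinct cs" "set cs = cliques_of k V E" "length cs = 1 + (card V - k) * k"
    and P: "P \<in> carrier_mat (length cs) (length cs)" "det P \<in> {1,-1}"
      "P * kdist_matrix k V E cs * transpose_mat P = Kmat k (length cs)"
      "P *\<^sub>v ones (length cs) = unit_vec (length cs) 0"
    and conn: "\<forall>t\<in>cliques_of k V E. \<forall>t'\<in>cliques_of k V E. (kstep k V E)\<^sup>*\<^sup>* t t'"
    unfolding Inv_def by blast
  define N where "N = length cs"
  obtain cl where cl: "distinct cl" "set cl = C" using finite_distinct_list[OF finC] by blast
  have lcl: "length cl = k" using distinct_card[OF cl(1)] cl(2) cardC by simp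
  define f where "f u = insert v (C - {u})" for u
  define ws where "ws = map f cl"
  have lws: "length ws = k" unfolding ws_def using lcl by simp
  have fv: "f x - {v} = C - {x}" for x unfolding f_def using vC by auto
  have injf: "inj_on f C"
  proof (rule inj_onI)
    fix x y assume xy: "x \<in> C" "y \<in> C" "f x = f y"
    then have "C - {x} = C - {y}" using fv[of x] fv[of y] xy(3) by simp
    then show "x = y" using xy(1) by blast
  qed
  have dws: "distinct ws" unfolding ws_def using cl injf by (simp add: distinct_map)
  have sws: "set ws = Nw" unfolding ws_def Nw_def f_def using cl(2) by auto
  have disj: "set cs \<inter> set ws = {}" using cs(2) sws old_not_Nw by blast
  define cs2 where "cs2 = cs @ ws"
  have dcs2: "distinct cs2" unfolding cs2_def using cs(1) dws disj by simp
  have scs2: "set cs2 = cliques_of k V' E'" unfolding cs2_def using cs(2) sws cliques_k by simp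
  have lcs2: "length cs2 = N + k" unfolding cs2_def N_def using lws by simp
  have "C \<in> set cs" using C_old cs(2) by simp
  then obtain c where c: "c < N" "cs ! c = C" unfolding N_def by (auto simp: in_set_conv_nth)
  define A where "A = kdist_matrix k V E cs"
  have Ac: "A \<in> carrier_mat N N" unfolding A_def N_def by (rule kdm_carrier)
  have Aent: "A $$ (i,j) = int (kdist k V E (cs!i) (cs!j))" if "i < N" "j < N" for i j
    unfolding A_def using that kdm_entry unfolding N_def by blast
  have csin: "cs ! i \<in> cliques_of k V E" if "i < N" for i
  proof -
    have "cs ! i \<in> set cs" by (rule nth_mem) (use that in \<open>simp add: N_def\<close>)
    then show ?thesis using cs(2) by simp
  qed
  have wsin: "ws ! i \<in> Nw" if "i < k" for i
  proof -
    have "ws ! i \<in> set ws" by (rule nth_mem) (use that lws in simp)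
    then show ?thesis using sws by simp
  qed
  have Cconn: "(kstep k V E)\<^sup>*\<^sup>* C (cs ! i)" if "i < N" for i
    using conn C_old csin[OF that] by blast
  define B where "B = mat N k (\<lambda>(x,j). A $$ (x,c) + 1)"
  define Bt where "Bt = mat k N (\<lambda>(i,x). A $$ (c,x) + 1)"
  define M where "M = mat k k (\<lambda>(i,j). if i = j then 0 else (1::int))"
  define Rn where "Rn = mat k N (\<lambda>(i,x). if x = c then -1 else (0::int))"
  define P2 where "P2 = four_block_mat P (0\<^sub>m N k) Rn (1\<^sub>m k)"
  have D2: "kdist_matrix k V' E' cs2 = four_block_mat A B Bt M"
  proof (rule eq_matI)
    fix i j assume "i < dim_row (four_block_mat A B Bt M)" "j < dim_col (four_block_mat A B Bt M)"
    then have ij: "i < N + k" "j < N + k" using Ac by (auto simp: B_def M_def)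
    have e: "kdist_matrix k V' E' cs2 $$ (i,j) = int (kdist k V' E' (cs2!i) (cs2!j))"
      by (rule kdm_entry) (use ij lcs2 in simp)+
    show "kdist_matrix k V' E' cs2 $$ (i,j) = four_block_mat A B Bt M $$ (i,j)"
    proof (cases "i < N")
      case iN: True
      show ?thesis
      proof (cases "j < N")
        case True
        then show ?thesis using e iN ij Ac Aent dist_old[OF csin csin]
          by (simp add: cs2_def nth_append N_def B_def M_def)
      next
        case False
        have j': "j - N < k" using ij False by simp
        have "kdist k V' E' (cs!i) (ws!(j-N)) = kdist k V' E' (ws!(j-N)) (cs!i)" by (rule kdist_sym)
        also have "\<dots> = kdist k V E C (cs!i) + 1" by (rule dist_new_old[OF wsin[OF j'] csin[OF iN] Cconn[OF iN]])
        also have "\<dots> = kdist k V E (cs!i) (cs!c) + 1" using c by (simp add: kdist_sym)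
        finally show ?thesis using e iN ij False Ac Aent[OF iN c(1)]
          by (simp add: cs2_def nth_append N_def B_def M_def)
      qed
    next
      case iN: False
      have i': "i - N < k" using ij iN by simp
      show ?thesis
      proof (cases "j < N")
        case True
        have "kdist k V' E' (ws!(i-N)) (cs!j) = kdist k V E C (cs!j) + 1"
          by (rule dist_new_old[OF wsin[OF i'] csin[OF True] Cconn[OF True]])
        also have "\<dots> = kdist k V E (cs!c) (cs!j) + 1" using c by simp
        finally show ?thesis using e iN ij True Ac Aent[OF c(1) True]
          by (simp add: cs2_def nth_append N_def Bt_def B_def M_def)
      next
        case False
        have j': "j - N < k" using ij False by simp
        have "kdist k V' E' (ws!(i-N)) (ws!(j-N)) = (if i - N = j - N then 0 else 1)"
        proof (cases "i - N = j - N")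
          case True then show ?thesis by simp
        next
          case False
          then have "ws!(i-N) \<noteq> ws!(j-N)" using dws i' j' lws by (simp add: nth_eq_iff_index_eq)
          then show ?thesis using False dist_new_new[OF wsin[OF i'] wsin[OF j']] by simp
        qed
        then show ?thesis using e iN ij False Ac
          by (simp add: cs2_def nth_append N_def Bt_def B_def M_def)
      qed
    qed
  qed (use Ac lcs2 in \<open>auto simp: kdist_matrix_def B_def M_def\<close>)
  have cardV: "card V \<ge> k" using card_mono[OF fin CV] cardC by simp
  have N: "N = 1 + (card V - k) * k" using cs(3) unfolding N_def .
  have Acc: "A $$ (c,c) = 0" using Aent[OF c(1) c(1)] by simp
  note S = step_matrix[OF k1 N Ac _ c(1) Acc _ _ B_def Bt_def M_def Rn_def P2_def]
  have PN: "P \<in> carrier_mat N N" using P(1) unfolding N_def .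
  have S1: "P2 * kdist_matrix k V' E' cs2 * transpose_mat P2 = Kmat k (length cs2)"
    using S(1)[OF PN] P(3,4) D2 lcs2 unfolding N_def A_def by simp
  have S2: "P2 *\<^sub>v ones (length cs2) = unit_vec (length cs2) 0"
    using S(2)[OF PN] P(3,4) lcs2 unfolding N_def A_def by simp
  have S3: "det P2 \<in> {1,-1}" using S(3)[OF PN] P(2,3,4) unfolding N_def A_def by simp
  have S4: "P2 \<in> carrier_mat (length cs2) (length cs2)"
    using S(4)[OF PN] P(3,4) lcs2 unfolding N_def A_def by simp
  have cardV': "card V' = card V + 1" unfolding V'_def using fin vV by simp
  have lcs2': "length cs2 = 1 + (card V' - k) * k"
    using lcs2 N cardV' cardV by (simp add: Suc_diff_le algebra_simps)
  have "distinct cs2 \<and> set cs2 = cliques_of k V' E' \<and> length cs2 = 1 + (card V' - k) * k \<and>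
     P2 \<in> carrier_mat (length cs2) (length cs2) \<and> det P2 \<in> {1,-1} \<and>
     P2 * kdist_matrix k V' E' cs2 * transpose_mat P2 = Kmat k (length cs2) \<and>
     P2 *\<^sub>v ones (length cs2) = unit_vec (length cs2) 0"
    using dcs2 scs2 lcs2' S1 S2 S3 S4 by simp
  then have ex: "\<exists>cs P. distinct cs \<and> set cs = cliques_of k V' E' \<and> length cs = 1 + (card V' - k) * k \<and>
     P \<in> carrier_mat (length cs) (length cs) \<and> det P \<in> {1,-1} \<and>
     P * kdist_matrix k V' E' cs * transpose_mat P = Kmat k (length cs) \<and>
     P *\<^sub>v ones (length cs) = unit_vec (length cs) 0" by (intro exI)
  have "Inv k V' E'"
    unfolding Inv_def using ex conn_new[OF conn] by (rule conjI)
  then show ?thesis unfolding V'_def E'_def .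
qed

end

lemma Inv_ktree: "ktree k V E \<Longrightarrow> k \<ge> 1 \<Longrightarrow> Inv k V E"
proof (induction rule: ktree.induct)
  case (base V)
  then show ?case by (intro Inv_base) auto
next
  case (step V E v C)
  have pr: "finite V" "\<forall>e\<in>E. e \<subseteq> V" using ktree_props[OF step.hyps(1)] by auto
  interpret kext k V E v C
    by unfold_locales (use pr step in auto)
  show ?case using Inv_step step.IH step.prems by blast
qed


lemma sel_sum_r:
  assumes "distinct zs" "a0 < length zs"
  shows "(\<Sum>a\<in>{0..<length zs}. (f a :: int) * (if zs ! a0 = zs ! a then 1 else 0)) = f a0"
proof -
  have "(\<Sum>a\<in>{0..<length zs}. f a * (if zs ! a0 = zs ! a then 1 else 0))
      = (\<Sum>a\<in>{0..<length zs}. f a * (if a = a0 then 1 else 0))"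
    by (rule sum.cong) (use assms in \<open>auto simp: nth_eq_iff_index_eq\<close>)
  also have "\<dots> = f a0" using sum_delta_mult2[OF assms(2), of f 1] by simp
  finally show ?thesis .
qed

lemma sel_sum_l:
  assumes "distinct zs" "a0 < length zs"
  shows "(\<Sum>a\<in>{0..<length zs}. (if zs ! a0 = zs ! a then 1 else 0) * (f a :: int)) = f a0"
  using sel_sum_r[OF assms, of f] by (simp add: mult.commute)

lemma perm_mat:
  assumes dx: "distinct xs" and dy: "distinct ys" and s: "set xs = set ys"
    and Pm: "Pm = mat (length xs) (length ys) (\<lambda>(i,j). if xs ! i = ys ! j then 1 else (0::int))"
  shows "kdist_matrix k V E xs = Pm * kdist_matrix k V E ys * transpose_mat Pm"
    and "transpose_mat Pm * Pm = 1\<^sub>m (length ys)"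
    and "Pm \<in> carrier_mat (length ys) (length ys)"
proof -
  have len: "length xs = length ys" using distinct_card[OF dx] distinct_card[OF dy] s by metis
  let ?n = "length ys"
  have Pic: "Pm \<in> carrier_mat ?n ?n" unfolding Pm len by simp
  then show "Pm \<in> carrier_mat (length ys) (length ys)" .
  have PTc: "transpose_mat Pm \<in> carrier_mat ?n ?n" using Pic by simp
  have Dc: "kdist_matrix k V E ys \<in> carrier_mat ?n ?n" by (rule kdm_carrier)
  have ex: "\<exists>b. b < ?n \<and> ys ! b = xs ! i" if "i < ?n" for i
  proof -
    have "xs ! i \<in> set ys" using s that len nth_mem[of i xs] by simp
    then show ?thesis by (auto simp: in_set_conv_nth)
  qed
  show "kdist_matrix k V E xs = Pm * kdist_matrix k V E ys * transpose_mat Pm"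
  proof (rule eq_matI)
    fix i j assume "i < dim_row (Pm * kdist_matrix k V E ys * transpose_mat Pm)"
      "j < dim_col (Pm * kdist_matrix k V E ys * transpose_mat Pm)"
    then have ij: "i < ?n" "j < ?n" using Pic by auto
    obtain b0 where b0: "b0 < ?n" "ys ! b0 = xs ! i" using ex[OF ij(1)] by blast
    obtain a0 where a0: "a0 < ?n" "ys ! a0 = xs ! j" using ex[OF ij(2)] by blast
    have PD: "(Pm * kdist_matrix k V E ys) $$ (i,a) = kdist_matrix k V E ys $$ (b0,a)" if "a < ?n" for a
    proof -
      have "(Pm * kdist_matrix k V E ys) $$ (i,a) = (\<Sum>b\<in>{0..<?n}. Pm $$ (i,b) * kdist_matrix k V E ys $$ (b,a))"
        by (rule mult_entry[OF Pic Dc ij(1) that])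
      also have "\<dots> = (\<Sum>b\<in>{0..<?n}. (if ys ! b0 = ys ! b then 1 else 0) * kdist_matrix k V E ys $$ (b,a))"
        by (rule sum.cong) (use ij b0 len in \<open>auto simp: Pm\<close>)
      also have "\<dots> = kdist_matrix k V E ys $$ (b0,a)" by (rule sel_sum_l[OF dy b0(1)])
      finally show ?thesis .
    qed
    have "(Pm * kdist_matrix k V E ys * transpose_mat Pm) $$ (i,j)
        = (\<Sum>a\<in>{0..<?n}. (Pm * kdist_matrix k V E ys) $$ (i,a) * transpose_mat Pm $$ (a,j))"
      by (rule mult_entry[OF _ PTc ij]) (use Pic Dc in simp)
    also have "\<dots> = (\<Sum>a\<in>{0..<?n}. kdist_matrix k V E ys $$ (b0,a) * (if ys ! a0 = ys ! a then 1 else 0))"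
      by (rule sum.cong) (use ij a0 len PD in \<open>auto simp: Pm\<close>)
    also have "\<dots> = kdist_matrix k V E ys $$ (b0,a0)" by (rule sel_sum_r[OF dy a0(1)])
    also have "\<dots> = int (kdist k V E (xs!i) (xs!j))" using kdm_entry[OF b0(1) a0(1)] a0 b0 by simp
    also have "\<dots> = kdist_matrix k V E xs $$ (i,j)" using kdm_entry ij len by metis
    finally show "kdist_matrix k V E xs $$ (i,j) = (Pm * kdist_matrix k V E ys * transpose_mat Pm) $$ (i,j)" ..
  qed (use Pic Dc len in \<open>auto simp: kdist_matrix_def\<close>)
  have exa: "\<exists>i. i < ?n \<and> xs ! i = ys ! a" if "a < ?n" for a
  proof -
    have "ys ! a \<in> set xs" using s that nth_mem[of a ys] by simp
    then show ?thesis using len by (auto simp: in_set_conv_nth)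
  qed
  show "transpose_mat Pm * Pm = 1\<^sub>m ?n"
  proof (rule eq_matI)
    fix a b assume "a < dim_row (1\<^sub>m ?n :: int mat)" "b < dim_col (1\<^sub>m ?n :: int mat)"
    then have ab: "a < ?n" "b < ?n" by auto
    obtain i0 where i0: "i0 < ?n" "xs ! i0 = ys ! a" using exa[OF ab(1)] by blast
    have dxn: "distinct xs" "i0 < length xs" using dx i0 len by auto
    have "(transpose_mat Pm * Pm) $$ (a,b) = (\<Sum>i\<in>{0..<?n}. transpose_mat Pm $$ (a,i) * Pm $$ (i,b))"
      by (rule mult_entry[OF PTc Pic ab])
    also have "\<dots> = (\<Sum>i\<in>{0..<length xs}. (if xs ! i0 = xs ! i then 1 else 0) * (if xs ! i = ys ! b then 1 else 0))"
      using len by (intro sum.cong) (use ab i0 Pic in \<open>auto simp: Pm\<close>)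
    also have "\<dots> = (if xs ! i0 = ys ! b then 1 else 0)" by (rule sel_sum_l[OF dxn])
    also have "\<dots> = (if a = b then 1 else 0)" using i0 dy ab by (simp add: nth_eq_iff_index_eq)
    finally show "(transpose_mat Pm * Pm) $$ (a,b) = 1\<^sub>m ?n $$ (a,b)" using ab by simp
  qed (use Pic in auto)
qed

lemma det_unit:
  fixes A B :: "int mat"
  assumes "A \<in> carrier_mat n n" "B \<in> carrier_mat n n" "A * B = 1\<^sub>m n"
  shows "det A \<in> {1,-1}" "det B \<in> {1,-1}"
proof -
  have "det A * det B = 1" using det_mult[OF assms(1,2)] assms(3) by simp
  then show "det A \<in> {1,-1}" "det B \<in> {1,-1}" by (auto simp: zmult_eq_1_iff)
qed

lemma det_unit_mult:
  fixes A B :: "int mat"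
  assumes "A \<in> carrier_mat n n" "B \<in> carrier_mat n n" "det A \<in> {1,-1}" "det B \<in> {1,-1}"
  shows "det (A * B) \<in> {1,-1}"
  using det_mult[OF assms(1,2)] assms(3,4) by auto

lemma inverse_int:
  fixes P :: "int mat"
  assumes P: "P \<in> carrier_mat n n" and d: "det P \<in> {1,-1}"
  shows "\<exists>Q. Q \<in> carrier_mat n n \<and> Q * P = 1\<^sub>m n \<and> P * Q = 1\<^sub>m n"
proof -
  define Q where "Q = det P \<cdot>\<^sub>m adj_mat P"
  have ac: "adj_mat P \<in> carrier_mat n n" using adj_mat(1)[OF P] .
  have dd: "det P * det P = 1" using d by auto
  have Qc: "Q \<in> carrier_mat n n" unfolding Q_def using ac by simp
  have "Q * P = det P \<cdot>\<^sub>m (adj_mat P * P)" unfolding Q_def by (rule mult_smult_assoc_mat[OF ac P])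
  also have "\<dots> = det P \<cdot>\<^sub>m (det P \<cdot>\<^sub>m 1\<^sub>m n)" using adj_mat(3)[OF P] by simp
  also have "\<dots> = 1\<^sub>m n" by (rule eq_matI) (use dd in auto)
  finally have 1: "Q * P = 1\<^sub>m n" .
  have "P * Q = det P \<cdot>\<^sub>m (P * adj_mat P)" unfolding Q_def by (rule mult_smult_distrib[OF P ac])
  also have "\<dots> = det P \<cdot>\<^sub>m (det P \<cdot>\<^sub>m 1\<^sub>m n)" using adj_mat(2)[OF P] by simp
  also have "\<dots> = 1\<^sub>m n" by (rule eq_matI) (use dd in auto)
  finally show ?thesis using 1 Qc by blast
qed

theorem mainTheorem2:
  fixes k n :: nat and V :: "'a set" and E :: "'a set set"
    and V' :: "'b set" and E' :: "'b set set"
    and cs :: "'a set list" and cs' :: "'b set list"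
  assumes "k \<ge> 1" and "n \<ge> k + 2"
    and "ktree k V E" and "card V = n"
    and "ktree k V' E'" and "card V' = n"
    and "distinct cs" and "set cs = cliques_of k V E"
    and "distinct cs'" and "set cs' = cliques_of k V' E'"
  shows "\<exists>P Q. P \<in> carrier_mat (length cs) (length cs) \<and>
               Q \<in> carrier_mat (length cs') (length cs') \<and>
               det P \<in> {1, -1} \<and> det Q \<in> {1, -1} \<and>
               kdist_matrix k V E cs = P * kdist_matrix k V' E' cs' * Q"
proof -
  obtain cs0 P0 where c0: "distinct cs0" "set cs0 = cliques_of k V E" "length cs0 = 1 + (card V - k) * k"
    and P0: "P0 \<in> carrier_mat (length cs0) (length cs0)" "det P0 \<in> {1,-1}"
      "P0 * kdist_matrix k V E cs0 * transpose_mat P0 = Kmat k (length cs0)"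
    using Inv_ktree[OF assms(3,1)] unfolding Inv_def by blast
  obtain cs1 P1 where c1: "distinct cs1" "set cs1 = cliques_of k V' E'" "length cs1 = 1 + (card V' - k) * k"
    and P1: "P1 \<in> carrier_mat (length cs1) (length cs1)" "det P1 \<in> {1,-1}"
      "P1 * kdist_matrix k V' E' cs1 * transpose_mat P1 = Kmat k (length cs1)"
    using Inv_ktree[OF assms(5,1)] unfolding Inv_def by blast
  define N where "N = length cs0"
  have l1: "length cs1 = N" using c0(3) c1(3) assms(4,6) unfolding N_def by simp
  have l: "length cs = N" using distinct_card[OF assms(7)] distinct_card[OF c0(1)] assms(8) c0(2)
    unfolding N_def by metis
  have l': "length cs' = N" using distinct_card[OF assms(9)] distinct_card[OF c1(1)] assms(10) c1(2) l1
    by metis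
  define Pm where "Pm = mat (length cs) (length cs0) (\<lambda>(i,j). if cs ! i = cs0 ! j then 1 else (0::int))"
  have s0: "set cs = set cs0" using assms(8) c0(2) by simp
  note pm = perm_mat[OF assms(7) c0(1) s0 Pm_def]
  define Pj where "Pj = mat (length cs') (length cs1) (\<lambda>(i,j). if cs' ! i = cs1 ! j then 1 else (0::int))"
  have s1: "set cs' = set cs1" using assms(10) c1(2) by simp
  note pm' = perm_mat[OF assms(9) c1(1) s1 Pj_def]
  have Pic: "Pm \<in> carrier_mat N N" using pm(3) unfolding N_def .
  have Pjc: "Pj \<in> carrier_mat N N" using pm'(3) l1 by simp
  have PjT: "transpose_mat Pj * Pj = 1\<^sub>m N" using pm'(2) l1 by simp
  have PiT: "transpose_mat Pm * Pm = 1\<^sub>m N" using pm(2) unfolding N_def .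
  have P0c: "P0 \<in> carrier_mat N N" using P0(1) unfolding N_def .
  have P1c: "P1 \<in> carrier_mat N N" using P1(1) l1 by simp
  obtain Q0 where Q0: "Q0 \<in> carrier_mat N N" "Q0 * P0 = 1\<^sub>m N" "P0 * Q0 = 1\<^sub>m N"
    using inverse_int[OF P0c P0(2)] by blast
  define D where "D = kdist_matrix k V E cs"
  define D0 where "D0 = kdist_matrix k V E cs0"
  define D' where "D' = kdist_matrix k V' E' cs'"
  define D1 where "D1 = kdist_matrix k V' E' cs1"
  define K where "K = Kmat k N"
  have Dc: "D \<in> carrier_mat N N" unfolding D_def using kdm_carrier l by metis
  have D0c: "D0 \<in> carrier_mat N N" unfolding D0_def N_def by (rule kdm_carrier)
  have D'c: "D' \<in> carrier_mat N N" unfolding D'_def using kdm_carrier l' by metis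
  have D1c: "D1 \<in> carrier_mat N N" unfolding D1_def using kdm_carrier l1 by metis
  have Kc: "K \<in> carrier_mat N N" unfolding K_def Kmat_def by simp
  have e1: "D = Pm * D0 * transpose_mat Pm" unfolding D_def D0_def by (rule pm(1))
  have e2: "D' = Pj * D1 * transpose_mat Pj" unfolding D'_def D1_def by (rule pm'(1))
  have e3: "P0 * D0 * transpose_mat P0 = K" using P0(3) unfolding D0_def K_def N_def .
  have e4: "P1 * D1 * transpose_mat P1 = K" using P1(3) l1 unfolding D1_def K_def by simp
  have Q0T: "transpose_mat P0 * transpose_mat Q0 = 1\<^sub>m N"
    using transpose_mult[OF Q0(1) P0c] Q0(2) by simp
  have D0e: "D0 = Q0 * K * transpose_mat Q0"
  proof -
    have "D0 = (Q0 * P0) * D0 * (transpose_mat P0 * transpose_mat Q0)" using Q0(2) Q0T D0c by simp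
    also have "\<dots> = Q0 * (P0 * D0 * transpose_mat P0) * transpose_mat Q0"
      using Q0(1) P0c D0c by (simp add: assoc_mult_mat[of _ N N _ N _ N])
    finally show ?thesis using e3 by simp
  qed
  have D1e: "D1 = transpose_mat Pj * D' * Pj"
  proof -
    have "D1 = (transpose_mat Pj * Pj) * D1 * (transpose_mat Pj * Pj)" using PjT D1c by simp
    also have "\<dots> = transpose_mat Pj * (Pj * D1 * transpose_mat Pj) * Pj"
      using Pjc D1c by (simp add: assoc_mult_mat[of _ N N _ N _ N])
    finally show ?thesis using e2 by simp
  qed
  define X where "X = Pm * Q0 * P1 * transpose_mat Pj"
  define Y where "Y = Pj * transpose_mat P1 * transpose_mat Q0 * transpose_mat Pm"
  have "D = Pm * (Q0 * (P1 * (transpose_mat Pj * D' * Pj) * transpose_mat P1) * transpose_mat Q0) * transpose_mat Pm"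
    using e1 D0e e4 D1e by simp
  also have "\<dots> = X * D' * Y" unfolding X_def Y_def
    using Pic Q0(1) P1c Pjc D'c by (simp add: assoc_mult_mat[of _ N N _ N _ N])
  finally have DXY: "D = X * D' * Y" .
  have dPi: "det Pm \<in> {1,-1}" using det_unit(2)[OF _ Pic PiT] Pic by simp
  have dPj: "det Pj \<in> {1,-1}" using det_unit(2)[OF _ Pjc PjT] Pjc by simp
  have dPjT: "det (transpose_mat Pj) \<in> {1,-1}" using dPj det_transpose[OF Pjc] by simp
  have dPiT: "det (transpose_mat Pm) \<in> {1,-1}" using dPi det_transpose[OF Pic] by simp
  have dQ0: "det Q0 \<in> {1,-1}" using det_unit(2)[OF P0c Q0(1) Q0(3)] .
  have dQ0T: "det (transpose_mat Q0) \<in> {1,-1}" using dQ0 det_transpose[OF Q0(1)] by simp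
  have dP1T: "det (transpose_mat P1) \<in> {1,-1}" using P1(2) det_transpose[OF P1c] by simp
  have PjTc: "transpose_mat Pj \<in> carrier_mat N N" using Pjc by simp
  have PmTc: "transpose_mat Pm \<in> carrier_mat N N" using Pic by simp
  have P1Tc: "transpose_mat P1 \<in> carrier_mat N N" using P1c by simp
  have Q0Tc: "transpose_mat Q0 \<in> carrier_mat N N" using Q0(1) by simp
  have Xc: "X \<in> carrier_mat N N" unfolding X_def
    by (intro mult_carrier_mat[OF _ PjTc] mult_carrier_mat[OF _ P1c] mult_carrier_mat[OF Pic Q0(1)])
  have Yc: "Y \<in> carrier_mat N N" unfolding Y_def
    by (intro mult_carrier_mat[OF _ PmTc] mult_carrier_mat[OF _ Q0Tc] mult_carrier_mat[OF Pjc P1Tc])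
  have x1: "det (Pm * Q0) \<in> {1,-1}" by (rule det_unit_mult[OF Pic Q0(1) dPi dQ0])
  have PQc: "Pm * Q0 \<in> carrier_mat N N" by (rule mult_carrier_mat[OF Pic Q0(1)])
  have PQPc: "Pm * Q0 * P1 \<in> carrier_mat N N" by (rule mult_carrier_mat[OF PQc P1c])
  have x2: "det (Pm * Q0 * P1) \<in> {1,-1}" by (rule det_unit_mult[OF PQc P1c x1 P1(2)])
  have dX: "det X \<in> {1,-1}" unfolding X_def by (rule det_unit_mult[OF PQPc PjTc x2 dPjT])
  have YAc: "Pj * transpose_mat P1 \<in> carrier_mat N N" by (rule mult_carrier_mat[OF Pjc P1Tc])
  have YBc: "Pj * transpose_mat P1 * transpose_mat Q0 \<in> carrier_mat N N" by (rule mult_carrier_mat[OF YAc Q0Tc])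
  have y1: "det (Pj * transpose_mat P1) \<in> {1,-1}" by (rule det_unit_mult[OF Pjc P1Tc dPj dP1T])
  have y2: "det (Pj * transpose_mat P1 * transpose_mat Q0) \<in> {1,-1}"
    by (rule det_unit_mult[OF YAc Q0Tc y1 dQ0T])
  have dY: "det Y \<in> {1,-1}" unfolding Y_def by (rule det_unit_mult[OF YBc PmTc y2 dPiT])
  show ?thesis
    using Xc Yc dX dY DXY l l' unfolding D_def D'_def by (intro exI[of _ X] exI[of _ Y]) simp
qed


end
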